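(* Let $n,m\ge 1$, let $\Lambda\in\mathbb{R}^{n\times n}$ be Schur stable (all eigenvalues in the open unit disk), and let $W_{\mathrm{in}}\in\mathbb{R}^{n\times m}$, $W_{\mathrm{out}}\in\mathbb{R}^{m\times n}$. Consider the discrete-time recurrent neural network \[ x(k+1)=\Lambda x(k)+W_{\mathrm{in}}w(k)+v(k),\quad z(k)=W_{\mathrm{out}}x(k),\quad w(k)=\Phi(z(k)+s(k)),\quad k=0,1,2,\dots, \] with $x(0)=0$, external inputs $s:\{0,1,\dots\}\to\mathbb{R}^m$, $v:\{0,1,\dots\}\to\mathbb{R}^n$, and $\Phi$ the entrywise ReLU. Suppose $\Pi\in\mathbb{S}^{2m}$ satisfies the IQC \[ \sum_{k=0}^{\tau}\begin{bmatrix}\xi(k)\\ \zeta(k)\end{bmatrix}^T\Pi\begin{bmatrix}\xi(k)\\ \zeta(k)\end{bmatrix}\ge 0\quad\text{for all }\tau\in\{0,1,2,\dots\} \] for every signal $\xi\in l_{2e}$ (with values in $\mathbb{R}^m$) and $\zeta=\Phi\xi$ (i.e. $\zeta(k)=\Phi(\xi(k))$). If there exist a positive semidefinite $P\in\mathbb{S}^n$ and a diagonal matrix $S\in\mathbb{R}^{m\times m}$ with strictly positive diagonal entries such that \[ \begin{bmatrix}-P&0\\0&-S\end{bmatrix}+\begin{bmatrix}\Lambda&W_{\mathrm{in}}\\ W_{\mathrm{out}}&0\end{bmatrix}^T\begin{bmatrix}P&0\\0&S\end{bmatrix}\begin{bmatrix}\Lambda&W_{\mathrm{in}}\\ W_{\mathrm{out}}&0\end{bmatrix}+\begin{bmatrix}W_{\mathrm{out}}&0\\0&I_m\end{bmatrix}^T\Pi\begin{bmatrix}W_{\mathrm{out}}&0\\0&I_m\end{bmatrix}\prec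 0, \] then the RNN is finite gain $l_2$ stable from the input $[s^T\ v^T]^T$ to the output $[z^T\ w^T]^T$, i.e. there exists $\gamma\ge 0$ such that $\|[z^T\ w^T]^T_\tau\|_2\le\gamma\|[s^T\ v^T]^T_\tau\|_2$ for all $s,v\in l_{2e}$ and all $\tau\ge 0$.
   Context: The ReLU $\Phi:\mathbb{R}^m\to\mathbb{R}^m$ is $\Phi(\xi)=[\phi(\xi_1),\dots,\phi(\xi_m)]^T$ with $\phi(\eta)=\eta$ for $\eta\ge0$ and $\phi(\eta)=0$ for $\eta<0$. $\mathbb{S}^k$ denotes real symmetric $k\times k$ matrices; $A\prec0$ means negative definite. For a discrete-time signal $w$ on $\{0,1,2,\dots\}$, $\|w\|_2=\sqrt{\sum_{k\ge0}|w(k)|_2^2}$ with $|\cdot|_2$ the Euclidean norm; $l_2=\{w:\|w\|_2<\infty\}$; the truncation $w_\tau$ is $w_\tau(k)=w(k)$ for $k\le\tau$ and $0$ for $k>\tau$; $l_{2e}=\{w: w_\tau\in l_2\ \forall\tau\ge0\}$. *)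

theory Defs
  imports "HOL-Analysis.Analysis"
begin

definition relu :: "real^'m \<Rightarrow> real^'m" where
  "relu x = (\<chi> i. (if x $ i \<ge> 0 then x $ i else 0))"

definition vstack :: "real^'a \<Rightarrow> real^'b \<Rightarrow> real^('a + 'b)" where
  "vstack x y = (\<chi> i. case i of Inl a \<Rightarrow> x $ a | Inr b \<Rightarrow> y $ b)"

definition block2 ::
  "real^'c^'a \<Rightarrow> real^'d^'a \<Rightarrow> real^'c^'b \<Rightarrow> real^'d^'b \<Rightarrow> real^('c + 'd)^('a + 'b)" where
  "block2 A B C D = (\<chi> i j. case i of
      Inl a \<Rightarrow> (case j of Inl c \<Rightarrow> A $ a $ c | Inr d \<Rightarrow> B $ a $ d)
    | Inr b \<Rightarrow> (case j of Inl c \<Rightarrow> C $ b $ c | Inr d \<Rightarrow> D $ b $ d))"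

definition schur_stable :: "real^'n^'n \<Rightarrow> bool" where
  "schur_stable A \<longleftrightarrow>
     (\<forall>(lam::complex) (u::complex^'n). u \<noteq> 0 \<and>
        (\<chi> i j. complex_of_real (A $ i $ j)) *v u = lam *s u \<longrightarrow> cmod lam < 1)"

definition symmetric_mat :: "real^'n^'n \<Rightarrow> bool" where
  "symmetric_mat M \<longleftrightarrow> transpose M = M"

definition psd :: "real^'n^'n \<Rightarrow> bool" where
  "psd M \<longleftrightarrow> symmetric_mat M \<and> (\<forall>x. x \<bullet> (M *v x) \<ge> 0)"

definition neg_def :: "real^'n^'n \<Rightarrow> bool" where
  "neg_def M \<longleftrightarrow> symmetric_mat M \<and> (\<forall>x. x \<noteq> 0 \<longrightarrow> x \<bullet> (M *v x) < 0)"

definition pos_diag :: "real^'n^'n \<Rightarrow> bool" where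
  "pos_diag S \<longleftrightarrow> (\<forall>i j. i \<noteq> j \<longrightarrow> S $ i $ j = 0) \<and> (\<forall>i. S $ i $ i > 0)"

definition trunc :: "(nat \<Rightarrow> 'a::zero) \<Rightarrow> nat \<Rightarrow> nat \<Rightarrow> 'a" where
  "trunc w \<tau> k = (if k \<le> \<tau> then w k else 0)"

definition l2norm :: "(nat \<Rightarrow> 'a::real_normed_vector) \<Rightarrow> real" where
  "l2norm w = sqrt (\<Sum>k. (norm (w k))\<^sup>2)"

definition in_l2 :: "(nat \<Rightarrow> 'a::real_normed_vector) \<Rightarrow> bool" where
  "in_l2 w \<longleftrightarrow> summable (\<lambda>k. (norm (w k))\<^sup>2)"

definition in_l2e :: "(nat \<Rightarrow> 'a::real_normed_vector) \<Rightarrow> bool" where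
  "in_l2e w \<longleftrightarrow> (\<forall>\<tau>. in_l2 (trunc w \<tau>))"

end

theory Submission
  imports Defs
begin


lemma sum_UNIV_plus: "(\<Sum>i\<in>(UNIV::('a::finite + 'b::finite) set). f i) = (\<Sum>a\<in>UNIV. f (Inl a)) + (\<Sum>b\<in>UNIV. f (Inr b))"
proof -
  have "sum f (UNIV <+> UNIV) = sum (f \<circ> Inl) UNIV + sum (f \<circ> Inr) UNIV"
    by (rule sum.Plus) simp_all
  then show ?thesis by (simp add: comp_def)
qed

lemma vstack_inner: "vstack a b \<bullet> vstack c d = a \<bullet> c + b \<bullet> d"
  by (simp add: inner_vec_def vstack_def sum_UNIV_plus)

lemma norm_vstack_sq: "(norm (vstack a b))\<^sup>2 = (norm a)\<^sup>2 + (norm b)\<^sup>2"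
  by (simp add: power2_norm_eq_inner vstack_inner)

lemma norm_vstack_ge1: "norm a \<le> norm (vstack a b)"
  by (rule power2_le_imp_le) (simp_all add: norm_vstack_sq)

lemma norm_vstack_ge2: "norm b \<le> norm (vstack a b)"
  by (rule power2_le_imp_le) (simp_all add: norm_vstack_sq)

lemma block2_mult: "block2 A B C D *v vstack x y = vstack (A *v x + B *v y) (C *v x + D *v y)"
  by (simp add: block2_def vstack_def matrix_vector_mult_def sum_UNIV_plus vec_eq_iff split: sum.splits)

lemma quad_transpose: fixes T :: "real^'a::finite^'b::finite" and D :: "real^'b^'b" shows "u \<bullet> ((transpose T ** D ** T) *v u) = (T *v u) \<bullet> (D *v (T *v u))"
proof -
  have "u \<bullet> ((transpose T ** D ** T) *v u) = u \<bullet> (transpose T *v (D *v (T *v u)))"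
    by (simp add: matrix_vector_mul_assoc matrix_mul_assoc)
  also have "\<dots> = u \<bullet> ((D *v (T *v u)) v* T)" by (simp only: transpose_matrix_vector)
  also have "\<dots> = ((D *v (T *v u)) v* T) \<bullet> u" by (rule inner_commute)
  also have "\<dots> = (D *v (T *v u)) \<bullet> (T *v u)" by (rule dot_lmul_matrix)
  finally show ?thesis by (simp only: inner_commute)
qed

lemma vstack_add: "vstack a b + vstack c d = vstack (a + c) (b + d)"
  by (simp add: vstack_def vec_eq_iff split: sum.splits)

lemma sym_inner: "symmetric_mat A \<Longrightarrow> u \<bullet> (A *v t) = t \<bullet> (A *v u)"
proof -
  assume "symmetric_mat A"
  then have "transpose A = A" by (simp add: symmetric_mat_def)
  have "u \<bullet> (A *v t) = (u v* A) \<bullet> t" by (simp only: dot_lmul_matrix)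
  also have "\<dots> = (transpose A *v u) \<bullet> t" by (simp only: transpose_matrix_vector)
  also have "\<dots> = t \<bullet> (A *v u)" using \<open>transpose A = A\<close> by (simp add: inner_commute)
  finally show ?thesis .
qed

lemma quad_add: "symmetric_mat A \<Longrightarrow> (u + t) \<bullet> (A *v (u + t)) = u \<bullet> (A *v u) + 2 * (u \<bullet> (A *v t)) + t \<bullet> (A *v t)"
  using sym_inner[of A u t]
  by (simp add: matrix_vector_right_distrib inner_add_left inner_add_right)

lemma mat_bound: "\<exists>K>0. \<forall>x. norm ((A::real^'a::finite^'b::finite) *v x) \<le> K * norm x"
proof -
  have "bounded_linear ((*v) A)" by (simp add: matrix_vector_mul_bounded_linear)
  then obtain K where "K>0" "\<forall>x. norm (A *v x) \<le> norm x * K" using bounded_linear.pos_bounded by blast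
  then show ?thesis by (metis mult.commute)
qed

lemma bil_bound: assumes "\<forall>x. norm (A *v x) \<le> K * norm x"
  shows "\<bar>u \<bullet> (A *v t)\<bar> \<le> K * norm u * norm t"
proof -
  have "\<bar>u \<bullet> (A *v t)\<bar> \<le> norm u * norm (A *v t)" by (rule Cauchy_Schwarz_ineq2)
  also have "\<dots> \<le> norm u * (K * norm t)" using assms by (simp add: mult_left_mono)
  finally show ?thesis by (simp add: algebra_simps)
qed

lemma negdef_eps: assumes "neg_def (M::real^'a::finite^'a)"
  shows "\<exists>e>0. \<forall>y. y \<bullet> (M *v y) \<le> - e * (norm y)\<^sup>2"
proof -
  have cont: "continuous_on (sphere 0 1) (\<lambda>y::real^'a. y \<bullet> (M *v y))"
    by (intro continuous_intros) (simp add: bounded_linear.continuous_on matrix_vector_mul_bounded_linear continuous_on_id)?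
  have "compact (sphere (0::real^'a) 1)" by simp
  moreover have "sphere (0::real^'a) 1 \<noteq> {}" by (simp add: sphere_eq_empty)
  ultimately obtain y0 where y0: "y0 \<in> sphere 0 1" "\<forall>y\<in>sphere 0 1. y \<bullet> (M *v y) \<le> y0 \<bullet> (M *v y0)"
    using continuous_attains_sup[OF _ _ cont] by blast
  have "y0 \<noteq> 0" using y0 by auto
  then have neg: "y0 \<bullet> (M *v y0) < 0" using assms by (simp add: neg_def_def)
  define e where "e = - (y0 \<bullet> (M *v y0))"
  have "e > 0" using neg e_def by simp
  moreover have "\<forall>y. y \<bullet> (M *v y) \<le> - e * (norm y)\<^sup>2"
  proof
    fix y :: "real^'a"
    show "y \<bullet> (M *v y) \<le> - e * (norm y)\<^sup>2"
    proof (cases "y = 0")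
      case True then show ?thesis by simp
    next
      case False
      define u where "u = (1 / norm y) *\<^sub>R y"
      have "u \<in> sphere 0 1" using False by (simp add: u_def)
      then have "u \<bullet> (M *v u) \<le> - e" using y0 e_def by auto
      moreover have "u \<bullet> (M *v u) = (y \<bullet> (M *v y)) / (norm y)\<^sup>2"
        by (simp add: u_def matrix_vector_mult_scaleR power2_eq_square)
      ultimately have "(y \<bullet> (M *v y)) / (norm y)\<^sup>2 \<le> - e" by simp
      moreover have "(norm y)\<^sup>2 > 0" using False by simp
      ultimately show ?thesis by (simp add: divide_le_eq mult.commute)
    qed
  qed
  ultimately show ?thesis by blast
qed

lemma relu_S: assumes "pos_diag S" shows "relu x \<bullet> (S *v relu x) \<le> x \<bullet> (S *v x)"
proof -
  have diag: "S *v y = (\<chi> i. S$i$i * y$i)" for y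
  proof -
    have "(\<Sum>j\<in>UNIV. S$i$j * y$j) = S$i$i * y$i" for i
      using assms unfolding pos_diag_def by (subst sum.remove[of _ i]) auto
    then show ?thesis by (simp add: matrix_vector_mult_def)
  qed
  have "relu x $ i * (S$i$i * relu x $ i) \<le> x$i * (S$i$i * x$i)" for i
    using assms unfolding pos_diag_def relu_def
    by (auto simp: mult_nonneg_nonneg zero_le_mult_iff)
  then show ?thesis unfolding diag inner_vec_def by (simp add: sum_mono)
qed

lemma pos_diag_sym: "pos_diag S \<Longrightarrow> symmetric_mat S"
  unfolding pos_diag_def symmetric_mat_def transpose_def vec_eq_iff
  by (metis vec_lambda_beta)


lemma neg_mat_mult: "(- (A::real^'a::finite^'b::finite)) *v x = - (A *v x)"
  by (simp add: matrix_vector_mult_def vec_eq_iff sum_negf)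

lemma norm_vstack_le: "norm (vstack a b) \<le> norm a + norm b"
proof (rule power2_le_imp_le)
  show "(norm (vstack a b))\<^sup>2 \<le> (norm a + norm b)\<^sup>2"
    by (simp add: norm_vstack_sq power2_sum)
qed simp

lemma in_l2e_all: "in_l2e (f :: nat \<Rightarrow> 'a::real_normed_vector)"
  unfolding in_l2e_def in_l2_def
  by (intro allI summable_finite[of "{..\<tau>}" for \<tau>]) (auto simp: trunc_def)

lemma l2norm_trunc: "l2norm (trunc f \<tau>) = sqrt (\<Sum>k\<le>\<tau>. (norm (f k))\<^sup>2)"
proof -
  have "(\<Sum>k. (norm (trunc f \<tau> k))\<^sup>2) = (\<Sum>k\<le>\<tau>. (norm (trunc f \<tau> k))\<^sup>2)"
    by (rule suminf_finite) (auto simp: trunc_def)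
  also have "\<dots> = (\<Sum>k\<le>\<tau>. (norm (f k))\<^sup>2)" by (rule sum.cong) (auto simp: trunc_def)
  finally show ?thesis by (simp add: l2norm_def)
qed

lemma young: fixes e B a b :: real assumes "e > 0" shows "B * a * b \<le> e/2 * a\<^sup>2 + B\<^sup>2/(2*e) * b\<^sup>2"
proof -
  have "0 \<le> (e*a - B*b)\<^sup>2" by simp
  moreover have "(e*a - B*b)\<^sup>2 = e\<^sup>2*a\<^sup>2 - 2*e*(B*a*b) + B\<^sup>2*b\<^sup>2"
    by (simp add: power2_eq_square algebra_simps)
  ultimately have X: "2*e*(B*a*b) \<le> e\<^sup>2*a\<^sup>2 + B\<^sup>2*b\<^sup>2" by linarith
  have Y: "e/2 * a\<^sup>2 + B\<^sup>2/(2*e) * b\<^sup>2 = (e\<^sup>2*a\<^sup>2 + B\<^sup>2*b\<^sup>2) / (2*e)"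
    using assms by (simp add: field_simps power2_eq_square)
  have "B * a * b \<le> (e\<^sup>2*a\<^sup>2 + B\<^sup>2*b\<^sup>2) / (2*e)"
    using X assms by (simp add: pos_le_divide_eq mult.commute)
  then show ?thesis using Y by simp
qed



theorem theorem1:
  fixes Lam :: "real^'n::finite^'n"
    and Win :: "real^'m::finite^'n"
    and Wout :: "real^'n^'m"
    and Pi :: "real^('m + 'm)^('m + 'm)"
  assumes stable: "schur_stable Lam"
    and Pi_sym: "symmetric_mat Pi"
    and iqc: "\<forall>\<xi> :: nat \<Rightarrow> real^'m. in_l2e \<xi> \<longrightarrow>
               (\<forall>\<tau>. (\<Sum>k\<le>\<tau>. vstack (\<xi> k) (relu (\<xi> k)) \<bullet>
                                (Pi *v vstack (\<xi> k) (relu (\<xi> k)))) \<ge> 0)"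
    and lmi: "\<exists>(P :: real^'n^'n) (S :: real^'m^'m). psd P \<and> pos_diag S \<and>
       neg_def (block2 (- P) 0 0 (- S)
          + transpose (block2 Lam Win Wout 0) ** block2 P 0 0 S ** block2 Lam Win Wout 0
          + transpose (block2 Wout 0 0 (mat 1)) ** Pi ** block2 Wout 0 0 (mat 1))"
  shows "\<exists>\<gamma>::real. \<gamma> \<ge> 0 \<and>
    (\<forall>(s :: nat \<Rightarrow> real^'m) (v :: nat \<Rightarrow> real^'n) (x :: nat \<Rightarrow> real^'n)
       (z :: nat \<Rightarrow> real^'m) (w :: nat \<Rightarrow> real^'m).
       in_l2e s \<and> in_l2e v \<and> x 0 = 0 \<and>
       (\<forall>k. x (Suc k) = Lam *v x k + Win *v w k + v k) \<and>
       (\<forall>k. z k = Wout *v x k) \<and>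
       (\<forall>k. w k = relu (z k + s k)) \<longrightarrow>
       (\<forall>\<tau>. l2norm (trunc (\<lambda>k. vstack (z k) (w k)) \<tau>)
              \<le> \<gamma> * l2norm (trunc (\<lambda>k. vstack (s k) (v k)) \<tau>)))"
proof -
  obtain P :: "real^'n^'n" and S :: "real^'m^'m" where
    P: "psd P" and S: "pos_diag S" and
    M: "neg_def (block2 (- P) 0 0 (- S)
          + transpose (block2 Lam Win Wout 0) ** block2 P 0 0 S ** block2 Lam Win Wout 0
          + transpose (block2 Wout 0 0 (mat 1)) ** Pi ** block2 Wout 0 0 (mat 1))"
    (is "neg_def ?M")
    using lmi by blast
  have Psym: "symmetric_mat P" using P by (simp add: psd_def)
  have Ssym: "symmetric_mat S" using S by (rule pos_diag_sym)
  obtain e where e: "e > 0" "\<forall>y. y \<bullet> (?M *v y) \<le> - e * (norm y)\<^sup>2"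
    using negdef_eps[OF M] by blast
  define V where "V y = y \<bullet> (P *v y)" for y
  define q where "q a b = vstack a b \<bullet> (Pi *v vstack a b)" for a b
  have I1: "vstack x w \<bullet> (?M *v vstack x w) =
     V (Lam *v x + Win *v w) + (Wout *v x) \<bullet> (S *v (Wout *v x)) - V x - w \<bullet> (S *v w)
     + q (Wout *v x) w" for x w
    unfolding V_def q_def
    by (simp add: matrix_vector_mult_add_rdistrib inner_add_right quad_transpose block2_mult
        vstack_inner neg_mat_mult matrix_vector_mult_0 matrix_vector_mul_lid)
  obtain KL where KL: "KL > 0" "\<forall>x. norm (Lam *v x) \<le> KL * norm x" using mat_bound by blast
  obtain KW where KW: "KW > 0" "\<forall>x. norm (Win *v x) \<le> KW * norm x" using mat_bound by blast
  obtain KO where KO: "KO > 0" "\<forall>x. norm (Wout *v x) \<le> KO * norm x" using mat_bound by blast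
  obtain KP where KP: "KP > 0" "\<forall>x. norm (P *v x) \<le> KP * norm x" using mat_bound by blast
  obtain KS where KS: "KS > 0" "\<forall>x. norm (S *v x) \<le> KS * norm x" using mat_bound by blast
  obtain KPi where KPi: "KPi > 0" "\<forall>x. norm (Pi *v x) \<le> KPi * norm x" using mat_bound by blast
  define B where "B = 2*KP*(KL+KW) + 2*KS*KO + 2*KPi*(KO+1)"
  define D where "D = KP + KS + KPi"
  define C where "C = D + B\<^sup>2/(2*e)"
  have C0: "C \<ge> 0" using KP KS KPi e by (simp add: C_def D_def)
  have step: "V (Lam *v x + Win *v w + v) - V x + e/2 * (norm (vstack x w))\<^sup>2 + q \<xi> w
      \<le> C * (norm (vstack s v))\<^sup>2"
    if xi: "\<xi> = Wout *v x + s" and wr: "w = relu \<xi>" for x w s v \<xi>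
  proof -
    define a where "a = Lam *v x + Win *v w"
    define zx where "zx = Wout *v x"
    define ny where "ny = norm (vstack x w)"
    define ne where "ne = norm (vstack s v)"
    have base: "V a + zx \<bullet> (S *v zx) - V x - w \<bullet> (S *v w) + q zx w \<le> - e * ny\<^sup>2"
      using I1[of x w] e(2) unfolding a_def zx_def ny_def by metis
    have Va: "V (a + v) = V a + 2 * (a \<bullet> (P *v v)) + V v"
      unfolding V_def using quad_add[OF Psym] by blast
    have Sw: "w \<bullet> (S *v w) \<le> zx \<bullet> (S *v zx) + 2 * (zx \<bullet> (S *v s)) + s \<bullet> (S *v s)"
      using relu_S[OF S, of \<xi>] quad_add[OF Ssym, of zx s] unfolding wr xi zx_def by simp
    have qx: "q \<xi> w = q zx w + 2 * (vstack zx w \<bullet> (Pi *v vstack s 0)) + vstack s 0 \<bullet> (Pi *v vstack s 0)"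
    proof -
      have "vstack \<xi> w = vstack zx w + vstack s 0" by (simp add: vstack_add xi zx_def)
      then show ?thesis unfolding q_def using quad_add[OF Pi_sym] by simp
    qed
    have nx: "norm x \<le> ny" and nw: "norm w \<le> ny" unfolding ny_def
      by (rule norm_vstack_ge1, rule norm_vstack_ge2)
    have ns: "norm s \<le> ne" and nv: "norm v \<le> ne" unfolding ne_def
      by (rule norm_vstack_ge1, rule norm_vstack_ge2)
    have ny0: "ny \<ge> 0" and ne0: "ne \<ge> 0" by (simp_all add: ny_def ne_def)
    have na: "norm a \<le> (KL+KW) * ny"
    proof -
      have "norm a \<le> norm (Lam *v x) + norm (Win *v w)" unfolding a_def by (rule norm_triangle_ineq)
      also have "\<dots> \<le> KL * norm x + KW * norm w" using KL KW by (simp add: add_mono)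
      also have "\<dots> \<le> KL * ny + KW * ny" using KL KW nx nw by (simp add: add_mono)
      finally show ?thesis by (simp add: algebra_simps)
    qed
    have nzx: "norm zx \<le> KO * ny"
      using KO nx unfolding zx_def by (meson mult_left_mono less_imp_le order_trans)
    have nzw: "norm (vstack zx w) \<le> (KO+1) * ny"
      using norm_vstack_le[of zx w] nzx nw by (simp add: algebra_simps)
    have ns0: "norm (vstack s (0::real^'m)) \<le> ne"
      using norm_vstack_le[of s "0::real^'m"] ns by simp
    have t1: "\<bar>a \<bullet> (P *v v)\<bar> \<le> KP * (KL+KW) * ny * ne"
    proof -
      have "\<bar>a \<bullet> (P *v v)\<bar> \<le> KP * norm a * norm v" by (rule bil_bound[OF KP(2)])
      also have "\<dots> \<le> KP * ((KL+KW) * ny) * ne"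
        using KP KL KW ny0 na nv by (intro mult_mono mult_left_mono) (auto simp: ny0 ne0 less_imp_le KO(1))
      finally show ?thesis by (simp add: algebra_simps)
    qed
    have t2: "\<bar>v \<bullet> (P *v v)\<bar> \<le> KP * ne\<^sup>2"
    proof -
      have "\<bar>v \<bullet> (P *v v)\<bar> \<le> KP * norm v * norm v" by (rule bil_bound[OF KP(2)])
      also have "\<dots> \<le> KP * ne * ne"
        using KP nv by (intro mult_mono mult_left_mono) (auto simp: ny0 ne0 less_imp_le KO(1))
      finally show ?thesis by (simp add: power2_eq_square algebra_simps)
    qed
    have t3: "\<bar>zx \<bullet> (S *v s)\<bar> \<le> KS * KO * ny * ne"
    proof -
      have "\<bar>zx \<bullet> (S *v s)\<bar> \<le> KS * norm zx * norm s" by (rule bil_bound[OF KS(2)])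
      also have "\<dots> \<le> KS * (KO * ny) * ne"
        using KS nzx ns by (intro mult_mono mult_left_mono) (auto simp: ny0 ne0 less_imp_le KO(1))
      finally show ?thesis by (simp add: algebra_simps)
    qed
    have t4: "\<bar>s \<bullet> (S *v s)\<bar> \<le> KS * ne\<^sup>2"
    proof -
      have "\<bar>s \<bullet> (S *v s)\<bar> \<le> KS * norm s * norm s" by (rule bil_bound[OF KS(2)])
      also have "\<dots> \<le> KS * ne * ne"
        using KS ns by (intro mult_mono mult_left_mono) (auto simp: ny0 ne0 less_imp_le KO(1))
      finally show ?thesis by (simp add: power2_eq_square algebra_simps)
    qed
    have t5: "\<bar>vstack zx w \<bullet> (Pi *v vstack s 0)\<bar> \<le> KPi * (KO+1) * ny * ne"
    proof -
      have "\<bar>vstack zx w \<bullet> (Pi *v vstack s 0)\<bar> \<le> KPi * norm (vstack zx w) * norm (vstack s (0::real^'m))"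
        by (rule bil_bound[OF KPi(2)])
      also have "\<dots> \<le> KPi * ((KO+1) * ny) * ne"
        using KPi nzw ns0 by (intro mult_mono mult_left_mono) (auto simp: ny0 ne0 less_imp_le KO(1))
      finally show ?thesis by (simp add: algebra_simps)
    qed
    have t6: "\<bar>vstack s 0 \<bullet> (Pi *v vstack s (0::real^'m))\<bar> \<le> KPi * ne\<^sup>2"
    proof -
      have "\<bar>vstack s 0 \<bullet> (Pi *v vstack s (0::real^'m))\<bar> \<le> KPi * norm (vstack s (0::real^'m)) * norm (vstack s (0::real^'m))"
        by (rule bil_bound[OF KPi(2)])
      also have "\<dots> \<le> KPi * ne * ne"
        using KPi ns0 by (intro mult_mono mult_left_mono) (auto simp: ny0 ne0 less_imp_le KO(1))
      finally show ?thesis by (simp add: power2_eq_square algebra_simps)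
    qed
    have "V (a + v) - V x + e/2 * ny\<^sup>2 + q \<xi> w \<le> - e/2 * ny\<^sup>2 + B * ny * ne + D * ne\<^sup>2"
    proof -
      have Vv: "V v = v \<bullet> (P *v v)" by (simp add: V_def)
      have Be: "B * ny * ne = 2*(KP * (KL+KW) * ny * ne) + 2*(KS * KO * ny * ne) + 2*(KPi * (KO+1) * ny * ne)"
        by (simp add: B_def algebra_simps)
      have De: "D * ne\<^sup>2 = KP * ne\<^sup>2 + KS * ne\<^sup>2 + KPi * ne\<^sup>2" by (simp add: D_def algebra_simps)
      show ?thesis unfolding Be De using base Va Sw qx Vv t1 t2 t3 t4 t5 t6
        unfolding abs_le_iff by linarith
    qed
    also have "\<dots> \<le> C * ne\<^sup>2"
      using young[OF e(1), of B ny ne] unfolding C_def by (simp add: algebra_simps)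
    finally show ?thesis unfolding a_def ny_def ne_def .
  qed
  define G where "G = sqrt ((KO\<^sup>2 + 1) * (2 * C / e))"
  show ?thesis
  proof (intro exI[of _ G] conjI allI impI)
    show "G \<ge> 0" using C0 e by (simp add: G_def)
  next
    fix s :: "nat \<Rightarrow> real^'m" and v :: "nat \<Rightarrow> real^'n" and x :: "nat \<Rightarrow> real^'n"
      and z :: "nat \<Rightarrow> real^'m" and w :: "nat \<Rightarrow> real^'m" and \<tau> :: nat
    assume H: "in_l2e s \<and> in_l2e v \<and> x 0 = 0 \<and>
       (\<forall>k. x (Suc k) = Lam *v x k + Win *v w k + v k) \<and>
       (\<forall>k. z k = Wout *v x k) \<and> (\<forall>k. w k = relu (z k + s k))"
    define Y where "Y k = (norm (vstack (x k) (w k)))\<^sup>2" for k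
    define E where "E k = (norm (vstack (s k) (v k)))\<^sup>2" for k
    define Out where "Out k = (norm (vstack (z k) (w k)))\<^sup>2" for k
    have st: "V (x (Suc k)) - V (x k) + e/2 * Y k + q (z k + s k) (w k) \<le> C * E k" for k
      using step[of "z k + s k" "x k" "s k" "w k" "v k"] H unfolding Y_def E_def by auto
    have "(\<Sum>k\<le>\<tau>. V (x (Suc k)) - V (x k) + e/2 * Y k + q (z k + s k) (w k)) \<le> (\<Sum>k\<le>\<tau>. C * E k)"
      by (rule sum_mono) (rule st)
    moreover have "(\<Sum>k\<le>\<tau>. V (x (Suc k)) - V (x k)) = V (x (Suc \<tau>)) - V (x 0)"
      using sum_lessThan_telescope[of "\<lambda>k. V (x k)" "Suc \<tau>"] by (simp add: lessThan_Suc_atMost)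
    moreover have "V (x 0) = 0" using H by (simp add: V_def)
    moreover have "V (x (Suc \<tau>)) \<ge> 0" using P by (simp add: V_def psd_def)
    moreover have "(\<Sum>k\<le>\<tau>. q (z k + s k) (w k)) \<ge> 0"
      using iqc in_l2e_all[of "\<lambda>k. z k + s k"] H unfolding q_def by auto
    ultimately have "e/2 * (\<Sum>k\<le>\<tau>. Y k) \<le> C * (\<Sum>k\<le>\<tau>. E k)"
      by (simp add: sum.distrib sum_distrib_left)
    then have YE: "(\<Sum>k\<le>\<tau>. Y k) \<le> (2 * C / e) * (\<Sum>k\<le>\<tau>. E k)"
      using e(1) by (simp add: field_simps)
    have OY: "Out k \<le> (KO\<^sup>2 + 1) * Y k" for k
    proof -
      have "norm (z k) \<le> KO * norm (x k)" using KO H by simp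
      then have "(norm (z k))\<^sup>2 \<le> KO\<^sup>2 * (norm (x k))\<^sup>2"
        by (metis norm_ge_zero power_mono power_mult_distrib)
      moreover have "KO\<^sup>2 * (norm (x k))\<^sup>2 \<le> KO\<^sup>2 * ((norm (x k))\<^sup>2 + (norm (w k))\<^sup>2)"
        by (intro mult_left_mono) simp_all
      moreover have "0 \<le> (norm (x k))\<^sup>2" by simp
      ultimately show ?thesis unfolding Out_def Y_def norm_vstack_sq
        by (simp only: distrib_right distrib_left mult_1_left)
    qed
    have "(\<Sum>k\<le>\<tau>. Out k) \<le> (KO\<^sup>2 + 1) * (\<Sum>k\<le>\<tau>. Y k)"
      using sum_mono[OF OY] by (simp add: sum_distrib_left)
    also have "\<dots> \<le> (KO\<^sup>2 + 1) * ((2 * C / e) * (\<Sum>k\<le>\<tau>. E k))"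
      using YE by (intro mult_left_mono) simp_all
    finally have OE: "(\<Sum>k\<le>\<tau>. Out k) \<le> G\<^sup>2 * (\<Sum>k\<le>\<tau>. E k)"
      using C0 e(1) by (simp add: G_def)
    have "sqrt (\<Sum>k\<le>\<tau>. Out k) \<le> sqrt (G\<^sup>2 * (\<Sum>k\<le>\<tau>. E k))" using OE by simp
    also have "\<dots> = G * sqrt (\<Sum>k\<le>\<tau>. E k)"
    proof -
      have "G \<ge> 0" using C0 e(1) by (simp add: G_def)
      then show ?thesis by (simp add: real_sqrt_mult)
    qed
    finally show "l2norm (trunc (\<lambda>k. vstack (z k) (w k)) \<tau>)
              \<le> G * l2norm (trunc (\<lambda>k. vstack (s k) (v k)) \<tau>)"
      unfolding l2norm_trunc Out_def E_def by simp
  qed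
qed

end
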